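(* With the setting in the context, for all $t,t'\in\mathrm{hom}(C,G)^{-1}$ and $m,m'\in\mathrm{hom}(C,G)_1$: $A_tA_{t'}=A_{t+t'}=A_{t'}A_t$, $B_mB_{m'}=B_{m+m'}=B_{m'}B_m$, and $A_tB_m=B_mA_t$.
   Context: $(C_\bullet,\partial^C_\bullet)$ is a chain complex with each $C_n$ free abelian on a finite set $K_n$, $K_n\ne\emptyset$ for finitely many $n$; $(G_\bullet,\partial^G_\bullet)$ is a chain complex of finite abelian groups. $\mathrm{hom}(C,G)^p=\prod_n\mathrm{Hom}(C_n,G_{n-p})$ with $(\delta^pf)_n=f_{n-1}\partial^C_n-(-1)^p\partial^G_{n-p}f_n$. $\mathrm{hom}(C,G)_p=\mathrm{Hom}(\mathrm{hom}(C,G)^p,U(1))$ (written additively: the sum of characters is their pointwise product), $\chi_m(f)=m(f)$, $\delta_1m=m\circ\delta^0$. $\mathcal H=\bigotimes_n\bigotimes_{x\in K_n}\mathbb C[G_n]$ with orthonormal basis $|f\rangle$, $f\in\mathrm{hom}(C,G)^0$; $P_t|f\rangle=|f+t\rangle$, $Q_m|f\rangle=\chi_m(f)|f\rangle$; $A_t=P_{\delta^{-1}t}$ for $t\in\mathrm{hom}(C,G)^{-1}$ and $B_m=Q_{\delta_1m}$ for $m\in\mathrm{hom}(C,G)_1$. *)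

theory Defs
  imports "HOL-Algebra.Free_Abelian_Groups" "HOL-Analysis.Analysis"
begin

(* The chain complex C: C_n is the free abelian group on K n (n :: int). *)
abbreviation FA :: "('k :: type) set \<Rightarrow> ('k \<Rightarrow>\<^sub>0 int) monoid" where
  "FA S \<equiv> free_Abelian_group S"

(* Standing assumptions of the setting. The groups G n are written
   multiplicatively in HOL-Algebra, but represent the additive groups G_n. *)
definition chain_setting ::
  "(int \<Rightarrow> 'k set) \<Rightarrow> (int \<Rightarrow> ('k \<Rightarrow>\<^sub>0 int) \<Rightarrow> ('k \<Rightarrow>\<^sub>0 int))
   \<Rightarrow> (int \<Rightarrow> ('g, 'b) monoid_scheme) \<Rightarrow> (int \<Rightarrow> 'g \<Rightarrow> 'g) \<Rightarrow> bool" where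
  "chain_setting K dC G dG \<longleftrightarrow>
     (\<forall>n. finite (K n)) \<and> finite {n. K n \<noteq> {}} \<and>
     (\<forall>n. dC n \<in> hom (FA (K n)) (FA (K (n - 1)))) \<and>
     (\<forall>n. \<forall>x \<in> carrier (FA (K n)). dC (n - 1) (dC n x) = 0) \<and>
     (\<forall>n. comm_group (G n) \<and> finite (carrier (G n))) \<and>
     (\<forall>n. dG n \<in> hom (G n) (G (n - 1))) \<and>
     (\<forall>n. \<forall>x \<in> carrier (G n). dG (n - 1) (dG n x) = \<one>\<^bsub>G (n - 1)\<^esub>)"

type_synonym ('k, 'g) cochain = "int \<Rightarrow> ('k \<Rightarrow>\<^sub>0 int) \<Rightarrow> 'g"

(* hom(C,G)^p = prod_n Hom(C_n, G_{n-p}); homomorphisms are taken extensional. *)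
definition cochains :: "(int \<Rightarrow> 'k set) \<Rightarrow> (int \<Rightarrow> ('g, 'b) monoid_scheme) \<Rightarrow> int
    \<Rightarrow> ('k, 'g) cochain set" where
  "cochains K G p = {f. \<forall>n. f n \<in> hom (FA (K n)) (G (n - p))
                                \<inter> extensional (carrier (FA (K n)))}"

definition cochain_add :: "(int \<Rightarrow> 'k set) \<Rightarrow> (int \<Rightarrow> ('g, 'b) monoid_scheme) \<Rightarrow> int
    \<Rightarrow> ('k, 'g) cochain \<Rightarrow> ('k, 'g) cochain \<Rightarrow> ('k, 'g) cochain" where
  "cochain_add K G p f g =
     (\<lambda>n. restrict (\<lambda>x. f n x \<otimes>\<^bsub>G (n - p)\<^esub> g n x) (carrier (FA (K n))))"

definition cochain_zero :: "(int \<Rightarrow> 'k set) \<Rightarrow> (int \<Rightarrow> ('g, 'b) monoid_scheme) \<Rightarrow> int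
    \<Rightarrow> ('k, 'g) cochain" where
  "cochain_zero K G p = (\<lambda>n. restrict (\<lambda>x. \<one>\<^bsub>G (n - p)\<^esub>) (carrier (FA (K n))))"

definition cochain_group :: "(int \<Rightarrow> 'k set) \<Rightarrow> (int \<Rightarrow> ('g, 'b) monoid_scheme) \<Rightarrow> int
    \<Rightarrow> ('k, 'g) cochain monoid" where
  "cochain_group K G p =
     \<lparr>carrier = cochains K G p, monoid.mult = cochain_add K G p, one = cochain_zero K G p\<rparr>"

definition coboundary ::
  "(int \<Rightarrow> 'k set) \<Rightarrow> (int \<Rightarrow> ('k \<Rightarrow>\<^sub>0 int) \<Rightarrow> ('k \<Rightarrow>\<^sub>0 int))
   \<Rightarrow> (int \<Rightarrow> ('g, 'b) monoid_scheme) \<Rightarrow> (int \<Rightarrow> 'g \<Rightarrow> 'g) \<Rightarrow> int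
   \<Rightarrow> ('k, 'g) cochain \<Rightarrow> ('k, 'g) cochain" where
  "coboundary K dC G dG p f =
     (\<lambda>n. restrict
        (\<lambda>x. f (n - 1) (dC n x) \<otimes>\<^bsub>G (n - (p + 1))\<^esub>
              (dG (n - p) (f n x)) [^]\<^bsub>G (n - (p + 1))\<^esub> (- ((-1::int) ^ nat \<bar>p\<bar>)))
        (carrier (FA (K n))))"

definition U1 :: "complex monoid" where
  "U1 = \<lparr>carrier = {z. cmod z = 1}, monoid.mult = (*), one = 1\<rparr>"

definition characters :: "(int \<Rightarrow> 'k set) \<Rightarrow> (int \<Rightarrow> ('g, 'b) monoid_scheme) \<Rightarrow> int
    \<Rightarrow> (('k, 'g) cochain \<Rightarrow> complex) set" where
  "characters K G p = hom (cochain_group K G p) U1"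

definition char_add :: "('a \<Rightarrow> complex) \<Rightarrow> ('a \<Rightarrow> complex) \<Rightarrow> 'a \<Rightarrow> complex" where
  "char_add m m' = (\<lambda>f. m f * m' f)"

(* Vectors of H are functions hom(C,G)^0 -> complex (coefficients w.r.t. the
   orthonormal basis |f>); |f> is the indicator of f. *)
definition ket :: "'a \<Rightarrow> 'a \<Rightarrow> complex" where
  "ket f = (\<lambda>g. if g = f then 1 else 0)"

(* the linear operator determined by its values T f on basis vectors |f>, f in B *)
definition lin_ext :: "'a set \<Rightarrow> ('a \<Rightarrow> 'a \<Rightarrow> complex) \<Rightarrow> ('a \<Rightarrow> complex) \<Rightarrow> ('a \<Rightarrow> complex)" where
  "lin_ext B T \<psi> = (\<lambda>g. \<Sum>f\<in>B. \<psi> f * T f g)"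

definition P_op :: "(int \<Rightarrow> 'k set) \<Rightarrow> (int \<Rightarrow> ('g, 'b) monoid_scheme) \<Rightarrow> ('k, 'g) cochain
    \<Rightarrow> (('k, 'g) cochain \<Rightarrow> complex) \<Rightarrow> (('k, 'g) cochain \<Rightarrow> complex)" where
  "P_op K G t = lin_ext (cochains K G 0) (\<lambda>f. ket (cochain_add K G 0 f t))"

definition Q_op :: "(int \<Rightarrow> 'k set) \<Rightarrow> (int \<Rightarrow> ('g, 'b) monoid_scheme) \<Rightarrow> (('k, 'g) cochain \<Rightarrow> complex)
    \<Rightarrow> (('k, 'g) cochain \<Rightarrow> complex) \<Rightarrow> (('k, 'g) cochain \<Rightarrow> complex)" where
  "Q_op K G m = lin_ext (cochains K G 0) (\<lambda>f g. m f * ket f g)"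

definition A_op where
  "A_op K dC G dG t = P_op K G (coboundary K dC G dG (-1) t)"

definition B_op where
  "B_op K dC G dG m = Q_op K G (m \<circ> coboundary K dC G dG 0)"

end

theory Submission imports Defs begin

lemma sum_ket_left:
  assumes "finite B" "a \<in> B"
  shows "(\<Sum>f\<in>B. ket a f * X f) = X a"
proof -
  have "(\<Sum>f\<in>B. ket a f * X f) = (\<Sum>f\<in>B. if f = a then X f else 0)"
    by (rule sum.cong) (auto simp: ket_def)
  also have "\<dots> = X a" using assms by (simp add: sum.delta)
  finally show ?thesis .
qed

lemma lin_ext_inf: "infinite B \<Longrightarrow> lin_ext B T \<psi> = (\<lambda>g. 0)"
  by (simp add: lin_ext_def)

lemma lin_ext_cong: "(\<And>f. f \<in> B \<Longrightarrow> T f = T' f) \<Longrightarrow> lin_ext B T = lin_ext B T'"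
  unfolding lin_ext_def by (intro ext sum.cong) auto

lemma L1:
  assumes "\<And>h. h \<in> B \<Longrightarrow> s1 h \<in> B"
  shows "lin_ext B (\<lambda>f. ket (s2 f)) (lin_ext B (\<lambda>f. ket (s1 f)) \<psi>) = lin_ext B (\<lambda>f. ket (s2 (s1 f))) \<psi>"
proof (cases "finite B")
  case False thus ?thesis by (simp add: lin_ext_def)
next
  case True
  show ?thesis
  proof
    fix g
    have "lin_ext B (\<lambda>f. ket (s2 f)) (lin_ext B (\<lambda>f. ket (s1 f)) \<psi>) g
        = (\<Sum>f\<in>B. \<Sum>h\<in>B. \<psi> h * (ket (s1 h) f * ket (s2 f) g))"
      by (simp add: lin_ext_def sum_distrib_right mult.assoc)
    also have "\<dots> = (\<Sum>h\<in>B. \<Sum>f\<in>B. \<psi> h * (ket (s1 h) f * ket (s2 f) g))"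
      by (rule sum.swap)
    also have "\<dots> = (\<Sum>h\<in>B. \<psi> h * ket (s2 (s1 h)) g)"
      by (rule sum.cong) (auto simp: sum_distrib_left[symmetric] sum_ket_left[OF True assms])
    finally show "lin_ext B (\<lambda>f. ket (s2 f)) (lin_ext B (\<lambda>f. ket (s1 f)) \<psi>) g
        = lin_ext B (\<lambda>f. ket (s2 (s1 f))) \<psi> g" by (simp add: lin_ext_def)
  qed
qed

lemma Qlin: "finite B \<Longrightarrow> lin_ext B (\<lambda>f g. \<mu> f * ket f g) \<psi> = (\<lambda>g. if g \<in> B then \<psi> g * \<mu> g else 0)"
proof
  fix g assume B: "finite B"
  show "lin_ext B (\<lambda>f g. \<mu> f * ket f g) \<psi> g = (if g \<in> B then \<psi> g * \<mu> g else 0)"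
  proof -
    have "lin_ext B (\<lambda>f g. \<mu> f * ket f g) \<psi> g = (\<Sum>f\<in>B. if f = g then \<psi> g * \<mu> g else 0)"
      unfolding lin_ext_def by (rule sum.cong) (auto simp: ket_def)
    thus ?thesis using B by (simp add: sum.delta')
  qed
qed

lemma L2:
  "lin_ext B (\<lambda>f g. \<mu> f * ket f g) (lin_ext B (\<lambda>f g. \<nu> f * ket f g) \<psi>)
   = lin_ext B (\<lambda>f g. (\<nu> f * \<mu> f) * ket f g) \<psi>"
proof (cases "finite B")
  case False thus ?thesis by (simp add: lin_ext_def)
next
  case True thus ?thesis unfolding Qlin[OF True] by (auto simp: mult.assoc)
qed

lemma L3:
  assumes "\<And>h. h \<in> B \<Longrightarrow> s h \<in> B" "\<And>h. h \<in> B \<Longrightarrow> \<mu> (s h) = \<mu> h"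
  shows "lin_ext B (\<lambda>f. ket (s f)) (lin_ext B (\<lambda>f g. \<mu> f * ket f g) \<psi>)
       = lin_ext B (\<lambda>f g. \<mu> f * ket f g) (lin_ext B (\<lambda>f. ket (s f)) \<psi>)"
proof (cases "finite B")
  case False thus ?thesis by (simp add: lin_ext_def)
next
  case True
  show ?thesis
  proof
    fix g
    have "lin_ext B (\<lambda>f. ket (s f)) (lin_ext B (\<lambda>f g. \<mu> f * ket f g) \<psi>) g
       = (\<Sum>h\<in>B. \<psi> h * \<mu> h * ket (s h) g)"
      unfolding Qlin[OF True] by (simp add: lin_ext_def)
    also have "\<dots> = (if g \<in> B then (\<Sum>h\<in>B. \<psi> h * ket (s h) g) * \<mu> g else 0)"
      using assms by (auto simp: sum_distrib_right ket_def intro!: sum.cong sum.neutral)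
    also have "\<dots> = lin_ext B (\<lambda>f g. \<mu> f * ket f g) (lin_ext B (\<lambda>f. ket (s f)) \<psi>) g"
      unfolding Qlin[OF True] by (simp add: lin_ext_def)
    finally show "lin_ext B (\<lambda>f. ket (s f)) (lin_ext B (\<lambda>f g. \<mu> f * ket f g) \<psi>) g
       = lin_ext B (\<lambda>f g. \<mu> f * ket f g) (lin_ext B (\<lambda>f. ket (s f)) \<psi>) g" .
  qed
qed


lemma hom_prod:
  assumes "comm_group H" "a \<in> hom F H" "b \<in> hom F H"
  shows "(\<lambda>x. a x \<otimes>\<^bsub>H\<^esub> b x) \<in> hom F H"
proof -
  interpret H: comm_group H by fact
  show ?thesis using assms(2,3)
    by (auto simp: hom_def Pi_iff H.m_ac)
qed

lemma hom_pow:
  assumes "comm_group H" "a \<in> hom F H"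
  shows "(\<lambda>x. a x [^]\<^bsub>H\<^esub> (e::int)) \<in> hom F H"
proof -
  interpret H: comm_group H by fact
  show ?thesis using assms(2)
    by (auto simp: hom_def Pi_iff H.int_pow_distrib)
qed

lemma hom_restr: "f \<in> hom (FA S) H \<Longrightarrow> restrict f (carrier (FA S)) \<in> hom (FA S) H"
  by (rule group.hom_restrict[OF group_free_Abelian_group]) auto

lemma cs_G: "chain_setting K dC G dG \<Longrightarrow> comm_group (G n)"
  by (simp add: chain_setting_def)
lemma cs_dG: "chain_setting K dC G dG \<Longrightarrow> dG n \<in> hom (G n) (G (n - 1))"
  by (simp add: chain_setting_def)
lemma cs_dC: "chain_setting K dC G dG \<Longrightarrow> dC n \<in> hom (FA (K n)) (FA (K (n - 1)))"
  by (simp add: chain_setting_def)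
lemma cs_dCdC: "chain_setting K dC G dG \<Longrightarrow> x \<in> carrier (FA (K n)) \<Longrightarrow> dC (n - 1) (dC n x) = 0"
  by (simp add: chain_setting_def)
lemma cs_dGdG: "chain_setting K dC G dG \<Longrightarrow> x \<in> carrier (G n) \<Longrightarrow> dG (n - 1) (dG n x) = \<one>\<^bsub>G (n - 1)\<^esub>"
  by (simp add: chain_setting_def)

lemma coch_hom: "f \<in> cochains K G p \<Longrightarrow> f n \<in> hom (FA (K n)) (G (n - p))"
  by (simp add: cochains_def)
lemma coch_ext: "f \<in> cochains K G p \<Longrightarrow> x \<notin> carrier (FA (K n)) \<Longrightarrow> f n x = undefined"
  by (simp add: cochains_def extensional_def)
lemma coch_car: "f \<in> cochains K G p \<Longrightarrow> x \<in> carrier (FA (K n)) \<Longrightarrow> f n x \<in> carrier (G (n - p))"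
  by (meson coch_hom hom_in_carrier)

lemma add_closed:
  assumes cs: "chain_setting K dC G dG" and f: "f \<in> cochains K G p" and g: "g \<in> cochains K G p"
  shows "cochain_add K G p f g \<in> cochains K G p"
proof -
  have "cochain_add K G p f g n \<in> hom (FA (K n)) (G (n - p))" for n
    unfolding cochain_add_def
    by (intro hom_restr hom_prod cs_G[OF cs] coch_hom f g)
  moreover have "cochain_add K G p f g n \<in> extensional (carrier (FA (K n)))" for n
    unfolding cochain_add_def by (rule restrict_extensional)
  ultimately show ?thesis unfolding cochains_def by blast
qed

lemma cb_closed:
  assumes cs: "chain_setting K dC G dG" and t: "t \<in> cochains K G p"
  shows "coboundary K dC G dG p t \<in> cochains K G (p + 1)"
  unfolding cochains_def
proof (intro CollectI allI IntI)
  fix n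
  have e1: "n - 1 - p = n - (p + 1)" "n - p - 1 = n - (p + 1)" by simp_all
  have h1: "t (n - 1) \<circ> dC n \<in> hom (FA (K n)) (G (n - (p + 1)))"
    using hom_compose[OF cs_dC[OF cs] coch_hom[OF t, of "n - 1"]] e1 by simp
  have h2: "dG (n - p) \<circ> t n \<in> hom (FA (K n)) (G (n - (p + 1)))"
    using hom_compose[OF coch_hom[OF t, of n] cs_dG[OF cs, of "n - p"]] e1 by simp
  show "coboundary K dC G dG p t n \<in> hom (FA (K n)) (G (n - (p + 1)))"
    unfolding coboundary_def
    apply (rule hom_restr, rule hom_prod[OF cs_G[OF cs]])
    using h1 apply (simp add: comp_def)
    apply (rule hom_pow[OF cs_G[OF cs]])
    using h2 by (simp add: comp_def)
  show "coboundary K dC G dG p t n \<in> extensional (carrier (FA (K n)))"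
    unfolding coboundary_def by simp
qed

lemma D1:
  assumes cs: "chain_setting K dC G dG" and t: "t \<in> cochains K G (-1)" and t': "t' \<in> cochains K G (-1)"
  shows "coboundary K dC G dG (-1) (cochain_add K G (-1) t t')
       = cochain_add K G 0 (coboundary K dC G dG (-1) t) (coboundary K dC G dG (-1) t')"
proof (intro ext)
  fix n x
  show "coboundary K dC G dG (-1) (cochain_add K G (-1) t t') n x
       = cochain_add K G 0 (coboundary K dC G dG (-1) t) (coboundary K dC G dG (-1) t') n x"
  proof (cases "x \<in> carrier (FA (K n))")
    case False thus ?thesis by (simp add: coboundary_def cochain_add_def)
  next
    case True
    interpret Gn: comm_group "G n" by (rule cs_G[OF cs])
    have dx: "dC n x \<in> carrier (FA (K (n - 1)))" by (rule hom_in_carrier[OF cs_dC[OF cs] True])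
    have a: "t (n - 1) (dC n x) \<in> carrier (G n)" "t' (n - 1) (dC n x) \<in> carrier (G n)"
      using coch_car[OF t dx] coch_car[OF t' dx] by simp_all
    have b: "t n x \<in> carrier (G (n + 1))" "t' n x \<in> carrier (G (n + 1))"
      using coch_car[OF t True] coch_car[OF t' True] by simp_all
    have dGh: "dG (n + 1) \<in> hom (G (n + 1)) (G n)" using cs_dG[OF cs, of "n + 1"] by simp
    have c: "dG (n + 1) (t n x) \<in> carrier (G n)" "dG (n + 1) (t' n x) \<in> carrier (G n)"
      using hom_in_carrier[OF dGh b(1)] hom_in_carrier[OF dGh b(2)] .
    have m: "dG (n + 1) (t n x \<otimes>\<^bsub>G (n + 1)\<^esub> t' n x) = dG (n + 1) (t n x) \<otimes>\<^bsub>G n\<^esub> dG (n + 1) (t' n x)"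
      by (rule hom_mult[OF dGh b])
    show ?thesis using True dx a c
      by (simp add: coboundary_def cochain_add_def m Gn.m_ac)
  qed
qed

lemma D2:
  assumes cs: "chain_setting K dC G dG" and h: "h \<in> cochains K G 0" and t: "t \<in> cochains K G (-1)"
  shows "coboundary K dC G dG 0 (cochain_add K G 0 h (coboundary K dC G dG (-1) t))
       = coboundary K dC G dG 0 h"
proof (intro ext)
  fix n x
  let ?s = "coboundary K dC G dG (-1) t"
  show "coboundary K dC G dG 0 (cochain_add K G 0 h ?s) n x = coboundary K dC G dG 0 h n x"
  proof (cases "x \<in> carrier (FA (K n))")
    case False thus ?thesis by (simp add: coboundary_def cochain_add_def)
  next
    case True
    interpret G1: comm_group "G (n - 1)" by (rule cs_G[OF cs])
    define y where "y = dC n x"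
    have dx: "y \<in> carrier (FA (K (n - 1)))" unfolding y_def by (rule hom_in_carrier[OF cs_dC[OF cs] True])
    have z: "dC (n - 1) y = 0" unfolding y_def by (rule cs_dCdC[OF cs True])
    have t0: "t (n - 1 - 1) 0 = \<one>\<^bsub>G (n - 1)\<^esub>"
      using hom_one[OF coch_hom[OF t, of "n - 1 - 1"] group_free_Abelian_group cs_G[OF cs, THEN comm_group.axioms(2)]]
      by simp
    have ty: "t (n - 1) y \<in> carrier (G n)" using coch_car[OF t dx] by simp
    have dGn: "dG n \<in> hom (G n) (G (n - 1))" by (rule cs_dG[OF cs])
    have a: "dG n (t (n - 1) y) \<in> carrier (G (n - 1))" by (rule hom_in_carrier[OF dGn ty])
    have sy: "?s (n - 1) y = dG n (t (n - 1) y)"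
      using dx z t0 a by (simp add: coboundary_def)
    have tx: "t n x \<in> carrier (G (n + 1))" using coch_car[OF t True] by simp
    have dGh: "dG (n + 1) \<in> hom (G (n + 1)) (G n)" using cs_dG[OF cs, of "n + 1"] by simp
    have c: "dG (n + 1) (t n x) \<in> carrier (G n)" by (rule hom_in_carrier[OF dGh tx])
    have sx: "?s n x = t (n - 1) y \<otimes>\<^bsub>G n\<^esub> dG (n + 1) (t n x)"
      using True c by (simp add: coboundary_def y_def group.int_pow_1[OF comm_group.axioms(2)[OF cs_G[OF cs]]])
    have grp: "group (G k)" for k by (rule comm_group.axioms(2)[OF cs_G[OF cs]])
    have o1: "dG n (dG (n + 1) \<one>\<^bsub>G (n + 1)\<^esub>) = \<one>\<^bsub>G (n - 1)\<^esub>"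
      using hom_one[OF dGh grp grp] hom_one[OF dGn grp grp] by simp
    have o2: "dG n (dG (n + 1) \<one>\<^bsub>G (n + 1)\<^esub>) = \<one>\<^bsub>G n\<^esub>"
      using cs_dGdG[OF cs monoid.one_closed[OF group.is_monoid[OF grp]], of "n + 1"] by simp
    have dd: "dG n (dG (n + 1) (t n x)) = \<one>\<^bsub>G (n - 1)\<^esub>"
      using cs_dGdG[OF cs tx] o1 o2 by simp
    have dsx: "dG n (?s n x) = dG n (t (n - 1) y)"
      unfolding sx hom_mult[OF dGn ty c] dd using a by simp
    have hy: "h (n - 1) y \<in> carrier (G (n - 1))" using coch_car[OF h dx] by simp
    have hx: "h n x \<in> carrier (G n)" using coch_car[OF h True] by simp
    have dhx: "dG n (h n x) \<in> carrier (G (n - 1))" by (rule hom_in_carrier[OF dGn hx])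
    have sxc: "?s n x \<in> carrier (G n)" unfolding sx using ty c cs_G[OF cs, of n]
      by (simp add: comm_group.axioms(2) group.is_monoid monoid.m_closed)
    have dhs: "dG n (h n x \<otimes>\<^bsub>G n\<^esub> ?s n x) = dG n (h n x) \<otimes>\<^bsub>G (n - 1)\<^esub> dG n (t (n - 1) y)"
      using hom_mult[OF dGn hx sxc] dsx by simp
    have "coboundary K dC G dG 0 (cochain_add K G 0 h ?s) n x
        = (h (n - 1) y \<otimes>\<^bsub>G (n - 1)\<^esub> dG n (t (n - 1) y)) \<otimes>\<^bsub>G (n - 1)\<^esub>
           inv\<^bsub>G (n - 1)\<^esub> (dG n (h n x) \<otimes>\<^bsub>G (n - 1)\<^esub> dG n (t (n - 1) y))"
      using True dx sy dhs c dhx a by (simp add: coboundary_def cochain_add_def y_def[symmetric] G1.int_pow_neg group.int_pow_1[OF grp])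
    also have "\<dots> = h (n - 1) y \<otimes>\<^bsub>G (n - 1)\<^esub> inv\<^bsub>G (n - 1)\<^esub> (dG n (h n x))"
      using hy a dhx by (simp add: G1.inv_mult G1.m_ac G1.r_inv)
    also have "\<dots> = coboundary K dC G dG 0 h n x"
      using True dhx by (simp add: coboundary_def y_def[symmetric] G1.int_pow_neg)
    finally show ?thesis .
  qed
qed

lemma add_assoc0:
  assumes cs: "chain_setting K dC G dG" and "a \<in> cochains K G p" "b \<in> cochains K G p" "c \<in> cochains K G p"
  shows "cochain_add K G p (cochain_add K G p a b) c = cochain_add K G p a (cochain_add K G p b c)"
proof (intro ext)
  fix n x
  interpret Gn: comm_group "G (n - p)" by (rule cs_G[OF cs])
  show "cochain_add K G p (cochain_add K G p a b) c n x = cochain_add K G p a (cochain_add K G p b c) n x"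
    using coch_car[OF assms(2), of x n] coch_car[OF assms(3), of x n] coch_car[OF assms(4), of x n]
    by (simp add: cochain_add_def Gn.m_assoc)
qed

lemma add_comm0:
  assumes cs: "chain_setting K dC G dG" and "a \<in> cochains K G p" "b \<in> cochains K G p"
  shows "cochain_add K G p a b = cochain_add K G p b a"
proof (intro ext)
  fix n x
  interpret Gn: comm_group "G (n - p)" by (rule cs_G[OF cs])
  show "cochain_add K G p a b n x = cochain_add K G p b a n x"
    using coch_car[OF assms(2), of x n] coch_car[OF assms(3), of x n]
    by (simp add: cochain_add_def Gn.m_comm)
qed


theorem lemma4:
  fixes K :: "int \<Rightarrow> 'k set"
    and dC :: "int \<Rightarrow> ('k \<Rightarrow>\<^sub>0 int) \<Rightarrow> ('k \<Rightarrow>\<^sub>0 int)"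
    and G :: "int \<Rightarrow> ('g, 'b) monoid_scheme"
    and dG :: "int \<Rightarrow> 'g \<Rightarrow> 'g"
  assumes "chain_setting K dC G dG"
    and "t \<in> cochains K G (-1)" and "t' \<in> cochains K G (-1)"
    and "m \<in> characters K G 1" and "m' \<in> characters K G 1"
  shows "A_op K dC G dG t \<circ> A_op K dC G dG t' = A_op K dC G dG (cochain_add K G (-1) t t')
       \<and> A_op K dC G dG (cochain_add K G (-1) t t') = A_op K dC G dG t' \<circ> A_op K dC G dG t
       \<and> B_op K dC G dG m \<circ> B_op K dC G dG m' = B_op K dC G dG (char_add m m')
       \<and> B_op K dC G dG (char_add m m') = B_op K dC G dG m' \<circ> B_op K dC G dG m
       \<and> A_op K dC G dG t \<circ> B_op K dC G dG m = B_op K dC G dG m \<circ> A_op K dC G dG t"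
proof -
  note cs = assms(1)
  let ?B = "cochains K G 0"
  let ?d = "coboundary K dC G dG (-1)"
  let ?e = "coboundary K dC G dG 0"
  let ?ad = "cochain_add K G 0"
  have dt: "?d t \<in> ?B" using cb_closed[OF cs assms(2)] by simp
  have dt': "?d t' \<in> ?B" using cb_closed[OF cs assms(3)] by simp
  have cl: "\<And>h s. h \<in> ?B \<Longrightarrow> s \<in> ?B \<Longrightarrow> ?ad h s \<in> ?B" by (rule add_closed[OF cs])
  have sum1: "?ad (?ad h (?d t')) (?d t) = ?ad h (?d (cochain_add K G (-1) t t'))" if "h \<in> ?B" for h
    unfolding D1[OF cs assms(2,3)] add_assoc0[OF cs that dt' dt] add_comm0[OF cs dt' dt] ..
  have sum2: "?ad (?ad h (?d t)) (?d t') = ?ad h (?d (cochain_add K G (-1) t t'))" if "h \<in> ?B" for h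
    unfolding D1[OF cs assms(2,3)] add_assoc0[OF cs that dt dt'] ..
  have Aeq: "A_op K dC G dG s = lin_ext ?B (\<lambda>f. ket (?ad f (?d s)))" for s
    by (simp add: A_op_def P_op_def)
  have Beq: "B_op K dC G dG \<mu> = lin_ext ?B (\<lambda>f g. (\<mu> \<circ> ?e) f * ket f g)" for \<mu>
    by (simp add: B_op_def Q_op_def)
  have 1: "A_op K dC G dG t \<circ> A_op K dC G dG t' = A_op K dC G dG (cochain_add K G (-1) t t')"
    unfolding Aeq comp_def
    by (subst L1) (auto intro!: cl dt' lin_ext_cong simp: sum1)
  have 2: "A_op K dC G dG (cochain_add K G (-1) t t') = A_op K dC G dG t' \<circ> A_op K dC G dG t"
    unfolding Aeq comp_def
    by (subst L1) (auto intro!: cl dt lin_ext_cong simp: sum2)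
  have 3: "B_op K dC G dG m \<circ> B_op K dC G dG m' = B_op K dC G dG (char_add m m')"
    unfolding Beq comp_def L2 by (auto simp: char_add_def mult.commute)
  have 4: "B_op K dC G dG (char_add m m') = B_op K dC G dG m' \<circ> B_op K dC G dG m"
    unfolding Beq comp_def L2 by (auto simp: char_add_def)
  have 5: "A_op K dC G dG t \<circ> B_op K dC G dG m = B_op K dC G dG m \<circ> A_op K dC G dG t"
    unfolding Aeq Beq comp_def
    by (subst L3) (auto intro!: cl dt simp: D2[OF cs _ assms(2)])
  show ?thesis using 1 2 3 4 5 by blast
qed

end
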